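(* There cannot be two finalized checkpoints on different (conflicting) chains. That is, if checkpoints $C$ and $C'$ are both finalized, then the block of one is an ancestor of (or equal to) the block of the other.
   Context: System: $n$ validators, each with equal stake, of which $f<n/3$ are Byzantine; the validator set is fixed between finalized checkpoints. Blocks form a tree rooted at the genesis block, and a chain is a path from the genesis block. A checkpoint is a pair $(b,e)$, where $b$ is the block of the first slot of epoch $e$ on the chain. A checkpoint vote is a signed pair, source $(a,e_a)$ and target $(b,e_b)$, with $e_a<e_b$. A supermajority link $(a,e_a)\to(b,e_b)$ exists when more than $2/3$ of the validators cast that checkpoint vote. A checkpoint is justified if it is the target of a supermajority link; the genesis checkpoint is justified. A checkpoint $(a,e_a)$ is finalized if: - it is justified; - there is a supermajority link $(a,e_a)\to(b,e_b)$ with $e_b-e_a\le 2$; - if $e_b-e_a=2$, the checkpoint at epoch $e_a+1$ on that chain is justified. Honest validators follow these rules: - each casts at most one checkpoint vote per epoch; - the source is the justified checkpoint with the highest epoch in its view; - the target is the current epoch's checkpoint on the candidate chain, selected by a fork choice rule that only follows chains extending the block of that highest justified checkpoint. *)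

theory Defs
  imports Main
begin

text \<open>The block tree is given by a parent function
  (with parent genesis = genesis) and a slot function; slots strictly decrease
  towards the genesis block, so every block has a unique path (chain) to genesis.
  S is the number of slots per epoch; epoch e starts at slot e * S.\<close>

type_synonym 'b checkpoint = "'b \<times> nat"
type_synonym ('v, 'b) vote = "'v \<times> 'b checkpoint \<times> 'b checkpoint"
  (* (validator, source, target) *)

definition block_tree :: "('b \<Rightarrow> 'b) \<Rightarrow> ('b \<Rightarrow> nat) \<Rightarrow> 'b \<Rightarrow> bool" where
  "block_tree parent slot genesis \<longleftrightarrow>
     parent genesis = genesis \<and> slot genesis = 0 \<and>
     (\<forall>b. b \<noteq> genesis \<longrightarrow> slot (parent b) < slot b)"

definition ancestor :: "('b \<Rightarrow> 'b) \<Rightarrow> 'b \<Rightarrow> 'b \<Rightarrow> bool" where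
  "ancestor parent a b \<longleftrightarrow> (\<exists>k. (parent ^^ k) b = a)"

text \<open>The block of the first slot of epoch e on the chain ending in h:
  the latest block of that chain whose slot is at most e * S.\<close>
definition epoch_boundary :: "('b \<Rightarrow> 'b) \<Rightarrow> ('b \<Rightarrow> nat) \<Rightarrow> nat \<Rightarrow> 'b \<Rightarrow> nat \<Rightarrow> 'b" where
  "epoch_boundary parent slot S h e =
     (THE x. ancestor parent x h \<and> slot x \<le> e * S \<and>
        (\<forall>y. ancestor parent y h \<and> slot y \<le> e * S \<longrightarrow> slot y \<le> slot x))"

definition sm_link :: "'v set \<Rightarrow> ('v, 'b) vote set \<Rightarrow> 'b checkpoint \<Rightarrow> 'b checkpoint \<Rightarrow> bool" where
  "sm_link Vals W s t \<longleftrightarrow> 3 * card {v \<in> Vals. (v, s, t) \<in> W} > 2 * card Vals"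

definition justified :: "'b \<Rightarrow> 'v set \<Rightarrow> ('v, 'b) vote set \<Rightarrow> 'b checkpoint \<Rightarrow> bool" where
  "justified genesis Vals W c \<longleftrightarrow> c = (genesis, 0) \<or> (\<exists>s. sm_link Vals W s c)"

definition finalized :: "('b \<Rightarrow> 'b) \<Rightarrow> ('b \<Rightarrow> nat) \<Rightarrow> nat \<Rightarrow> 'b \<Rightarrow> 'v set
    \<Rightarrow> ('v, 'b) vote set \<Rightarrow> 'b checkpoint \<Rightarrow> bool" where
  "finalized parent slot S genesis Vals W c \<longleftrightarrow>
     justified genesis Vals W c \<and>
     (\<exists>b eb. sm_link Vals W c (b, eb) \<and> snd c < eb \<and> eb \<le> snd c + 2 \<and>
        (eb = snd c + 2 \<longrightarrow>
           justified genesis Vals W (epoch_boundary parent slot S b (snd c + 1), snd c + 1)))"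

text \<open>Honest behaviour of validator v. view v e is the set of votes v has seen
  when voting in epoch e (a subset of all cast votes W, growing over time).
  The vote cast in epoch e has target epoch e.\<close>
definition honest :: "('b \<Rightarrow> 'b) \<Rightarrow> ('b \<Rightarrow> nat) \<Rightarrow> nat \<Rightarrow> 'b \<Rightarrow> 'v set
    \<Rightarrow> ('v, 'b) vote set \<Rightarrow> ('v \<Rightarrow> nat \<Rightarrow> ('v, 'b) vote set) \<Rightarrow> 'v \<Rightarrow> bool" where
  "honest parent slot S genesis Vals W view v \<longleftrightarrow>
     (\<forall>e. view v e \<subseteq> W) \<and>
     (\<forall>e e'. e \<le> e' \<longrightarrow> view v e \<subseteq> view v e') \<and>
     (\<forall>s t s' t'. (v, s, t) \<in> W \<longrightarrow> (v, s', t') \<in> W \<longrightarrow> snd t = snd t'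
         \<longrightarrow> s = s' \<and> t = t') \<and>
     (\<forall>s t. (v, s, t) \<in> W \<longrightarrow>
         justified genesis Vals (view v (snd t)) s \<and>
         (\<forall>c. justified genesis Vals (view v (snd t)) c \<longrightarrow> snd c \<le> snd s) \<and>
         (\<exists>h. ancestor parent (fst s) h \<and>
              t = (epoch_boundary parent slot S h (snd t), snd t)))"

end

theory Submission
  imports Defs
begin

lemma anc_refl: "ancestor p a a"
  unfolding ancestor_def by (rule exI[of _ 0]) simp

lemma anc_trans: "ancestor p a b \<Longrightarrow> ancestor p b c \<Longrightarrow> ancestor p a c"
  unfolding ancestor_def
proof -
  assume "\<exists>k. (p ^^ k) b = a" "\<exists>k. (p ^^ k) c = b"
  then obtain j k where "(p ^^ j) b = a" "(p ^^ k) c = b" by blast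
  then have "(p ^^ (j + k)) c = a" by (simp add: funpow_add)
  then show "\<exists>k. (p ^^ k) c = a" by blast
qed

lemma bt_parent_le: "block_tree p slot g \<Longrightarrow> slot (p x) \<le> slot x"
  unfolding block_tree_def by (cases "x = g") (auto intro: less_imp_le)

lemma anc_slot: assumes bt: "block_tree p slot g" and "ancestor p a b" shows "slot a \<le> slot b"
proof -
  obtain k where k: "(p ^^ k) b = a" using assms(2) unfolding ancestor_def by blast
  have "slot ((p ^^ k) b) \<le> slot b"
  proof (induction k)
    case 0 then show ?case by simp
  next
    case (Suc k)
    have "slot ((p ^^ Suc k) b) = slot (p ((p ^^ k) b))" by simp
    also have "\<dots> \<le> slot ((p ^^ k) b)" by (rule bt_parent_le[OF bt])
    finally show ?case using Suc by simp
  qed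
  then show ?thesis using k by simp
qed

lemma anc_lin: assumes "ancestor p x h" "ancestor p y h"
  shows "ancestor p x y \<or> ancestor p y x"
proof -
  obtain k k' where k: "(p ^^ k) h = x" "(p ^^ k') h = y" using assms unfolding ancestor_def by blast
  show ?thesis
  proof (cases "k \<le> k'")
    case True
    have "(p ^^ (k' - k)) x = y" using k True
      by (metis funpow_add le_add_diff_inverse2 o_apply)
    then show ?thesis unfolding ancestor_def by blast
  next
    case False
    have "(p ^^ (k - k')) y = x" using k False
      by (metis funpow_add le_add_diff_inverse2 o_apply nat_le_linear)
    then show ?thesis unfolding ancestor_def by blast
  qed
qed

lemma funpow_gen: "block_tree p slot g \<Longrightarrow> (p ^^ n) g = g"
  unfolding block_tree_def by (induction n) auto

lemma anc_eq: assumes bt: "block_tree p slot g" and "ancestor p x y" "slot x = slot y" shows "x = y"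
proof -
  obtain k where k: "(p ^^ k) y = x" using assms(2) unfolding ancestor_def by blast
  show ?thesis
  proof (cases k)
    case 0 then show ?thesis using k by simp
  next
    case (Suc j)
    then have x: "(p ^^ j) (p y) = x" using k by (metis funpow_Suc_right o_apply)
    show ?thesis
    proof (cases "y = g")
      case True
      then have "p y = g" using bt unfolding block_tree_def by simp
      then show ?thesis using x funpow_gen[OF bt] True by simp
    next
      case False
      then have "slot (p y) < slot y" using bt unfolding block_tree_def by simp
      moreover have "slot x \<le> slot (p y)" using anc_slot[OF bt] x unfolding ancestor_def by blast
      ultimately show ?thesis using assms(3) by simp
    qed
  qed
qed

lemma anc_gen: assumes bt: "block_tree p slot g" shows "ancestor p g h"
proof (induction "slot h" arbitrary: h rule: less_induct)
  case less
  show ?case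
  proof (cases "h = g")
    case True then show ?thesis by (simp add: anc_refl)
  next
    case False
    then have "slot (p h) < slot h" using bt unfolding block_tree_def by simp
    then have "ancestor p g (p h)" using less by blast
    moreover have "ancestor p (p h) h" unfolding ancestor_def by (rule exI[of _ 1]) simp
    ultimately show ?thesis by (rule anc_trans)
  qed
qed

lemma eb_props: assumes bt: "block_tree p slot g"
  shows "ancestor p (epoch_boundary p slot S h e) h \<and> slot (epoch_boundary p slot S h e) \<le> e * S \<and>
     (\<forall>y. ancestor p y h \<and> slot y \<le> e * S \<longrightarrow> slot y \<le> slot (epoch_boundary p slot S h e))"
proof -
  define Q where "Q = (\<lambda>x. ancestor p x h \<and> slot x \<le> e * S \<and>
        (\<forall>y. ancestor p y h \<and> slot y \<le> e * S \<longrightarrow> slot y \<le> slot x))"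
  obtain kg where kg: "(p ^^ kg) h = g" using anc_gen[OF bt] unfolding ancestor_def by blast
  have sg: "slot g = 0" using bt unfolding block_tree_def by simp
  define k0 where "k0 = (LEAST k. slot ((p ^^ k) h) \<le> e * S)"
  have ex: "slot ((p ^^ kg) h) \<le> e * S" using kg sg by simp
  have k0s: "slot ((p ^^ k0) h) \<le> e * S" unfolding k0_def by (rule LeastI[of "\<lambda>k. slot ((p ^^ k) h) \<le> e * S", OF ex])
  define x0 where "x0 = (p ^^ k0) h"
  have Qx0: "Q x0"
    unfolding Q_def
  proof (intro conjI allI impI)
    show "ancestor p x0 h" unfolding x0_def ancestor_def by blast
    show "slot x0 \<le> e * S" using k0s x0_def by simp
    fix y assume y: "ancestor p y h \<and> slot y \<le> e * S"
    then obtain k where k: "(p ^^ k) h = y" unfolding ancestor_def by blast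
    have "k0 \<le> k" unfolding k0_def using y k by (intro Least_le) simp
    then have "(p ^^ (k - k0)) x0 = y" using k unfolding x0_def
      by (metis funpow_add le_add_diff_inverse2 o_apply)
    then have "ancestor p y x0" unfolding ancestor_def by blast
    then show "slot y \<le> slot x0" by (rule anc_slot[OF bt])
  qed
  have uniq: "y = x0" if "Q y" for y
  proof -
    have "slot y = slot x0" using that Qx0 unfolding Q_def by (meson le_antisym)
    moreover have "ancestor p y x0 \<or> ancestor p x0 y" using that Qx0 unfolding Q_def
      by (meson anc_lin)
    ultimately show ?thesis using anc_eq[OF bt] by metis
  qed
  have "epoch_boundary p slot S h e = x0"
    unfolding epoch_boundary_def using Qx0 uniq unfolding Q_def by (rule the_equality)
  then show ?thesis using Qx0 unfolding Q_def by simp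
qed

lemma eb_anc: assumes bt: "block_tree p slot g" and "ancestor p a h" "slot a \<le> e * S"
  shows "ancestor p a (epoch_boundary p slot S h e)"
proof -
  let ?x = "epoch_boundary p slot S h e"
  have P: "ancestor p ?x h" "slot ?x \<le> e * S" "slot a \<le> slot ?x"
    using eb_props[OF bt, of S h e] assms by auto
  from anc_lin[OF assms(2) P(1)] show ?thesis
  proof
    assume "ancestor p ?x a"
    moreover then have "slot ?x = slot a" using anc_slot[OF bt] P by (meson le_antisym)
    ultimately have "?x = a" using anc_eq[OF bt] by blast
    then show ?thesis by (simp add: anc_refl)
  qed
qed

lemma sm_link_mono: assumes "finite Vals" "W' \<subseteq> W" "sm_link Vals W' s t" shows "sm_link Vals W s t"
proof -
  have "card {v \<in> Vals. (v, s, t) \<in> W'} \<le> card {v \<in> Vals. (v, s, t) \<in> W}"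
    using assms(1,2) by (intro card_mono) auto
  then show ?thesis using assms(3) unfolding sm_link_def by linarith
qed

lemma justified_mono: "finite Vals \<Longrightarrow> W' \<subseteq> W \<Longrightarrow> justified g Vals W' c \<Longrightarrow> justified g Vals W c"
  unfolding justified_def using sm_link_mono by blast

locale ffg =
  fixes parent :: "'b \<Rightarrow> 'b" and slot :: "'b \<Rightarrow> nat" and genesis :: 'b and S :: nat
    and Vals F :: "'v set" and W :: "('v, 'b) vote set"
    and view :: "'v \<Rightarrow> nat \<Rightarrow> ('v, 'b) vote set"
  assumes bt: "block_tree parent slot genesis"
    and fin: "finite Vals"
    and FV: "F \<subseteq> Vals"
    and cardF: "3 * card F < card Vals"
    and Wep: "\<forall>(v, s, t) \<in> W. snd s < snd t"
    and hon: "\<forall>v \<in> Vals - F. honest parent slot S genesis Vals W view v"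
begin

abbreviation "J \<equiv> justified genesis Vals W"

lemma two_links: assumes "sm_link Vals W s t" "sm_link Vals W s' t'"
  shows "\<exists>v \<in> Vals - F. (v, s, t) \<in> W \<and> (v, s', t') \<in> W"
proof (rule ccontr)
  assume na: "\<not> ?thesis"
  let ?A = "{v \<in> Vals. (v, s, t) \<in> W}" and ?B = "{v \<in> Vals. (v, s', t') \<in> W}"
  have fA: "finite ?A" "finite ?B" using fin by auto
  have "?A \<inter> ?B \<subseteq> F" using na by auto
  then have c1: "card (?A \<inter> ?B) \<le> card F" using fin FV by (meson card_mono finite_subset)
  have "card (?A \<union> ?B) \<le> card Vals" using fin by (intro card_mono) auto
  moreover have "card (?A \<union> ?B) + card (?A \<inter> ?B) = card ?A + card ?B"
    using card_Un_Int[OF fA] by simp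
  ultimately show False using assms c1 cardF unfolding sm_link_def by linarith
qed

lemma link_voter: assumes "sm_link Vals W s t" shows "\<exists>v \<in> Vals - F. (v, s, t) \<in> W"
  using two_links[OF assms assms] by blast

lemma honest_v: "v \<in> Vals - F \<Longrightarrow> honest parent slot S genesis Vals W view v"
  using hon by blast

lemma hp: assumes "v \<in> Vals - F"
  shows hp1: "\<And>e. view v e \<subseteq> W"
    and hp2: "\<And>e e'. e \<le> e' \<Longrightarrow> view v e \<subseteq> view v e'"
    and hp3: "\<And>s t s' t'. (v, s, t) \<in> W \<Longrightarrow> (v, s', t') \<in> W \<Longrightarrow> snd t = snd t' \<Longrightarrow> s = s' \<and> t = t'"
    and hp4: "\<And>s t. (v, s, t) \<in> W \<Longrightarrow> justified genesis Vals (view v (snd t)) s"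
    and hp5: "\<And>s t c. (v, s, t) \<in> W \<Longrightarrow> justified genesis Vals (view v (snd t)) c \<Longrightarrow> snd c \<le> snd s"
    and hp6: "\<And>s t. (v, s, t) \<in> W \<Longrightarrow> (\<exists>h. ancestor parent (fst s) h \<and>
              t = (epoch_boundary parent slot S h (snd t), snd t))"
proof -
  note H = honest_v[OF assms, unfolded honest_def]
  show "\<And>e. view v e \<subseteq> W" using conjunct1[OF H] by blast
  show "\<And>e e'. e \<le> e' \<Longrightarrow> view v e \<subseteq> view v e'" using conjunct1[OF conjunct2[OF H]] by blast
  show "\<And>s t s' t'. (v, s, t) \<in> W \<Longrightarrow> (v, s', t') \<in> W \<Longrightarrow> snd t = snd t' \<Longrightarrow> s = s' \<and> t = t'"
    using conjunct1[OF conjunct2[OF conjunct2[OF H]]] by blast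
  note H4 = conjunct2[OF conjunct2[OF conjunct2[OF H]]]
  show "\<And>s t. (v, s, t) \<in> W \<Longrightarrow> justified genesis Vals (view v (snd t)) s"
    using H4 by blast
  show "\<And>s t c. (v, s, t) \<in> W \<Longrightarrow> justified genesis Vals (view v (snd t)) c \<Longrightarrow> snd c \<le> snd s"
    using H4 by blast
  show "\<And>s t. (v, s, t) \<in> W \<Longrightarrow> (\<exists>h. ancestor parent (fst s) h \<and>
              t = (epoch_boundary parent slot S h (snd t), snd t))"
    using H4 by blast
qed

lemma same_epoch_vote: assumes "v \<in> Vals - F" "(v, s, t) \<in> W" "(v, s', t') \<in> W" "snd t = snd t'"
  shows "s = s' \<and> t = t'"
  by (rule hp3[OF assms])

lemma vote_props: assumes "v \<in> Vals - F" "(v, s, t) \<in> W"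
  shows "J s \<and> snd s < snd t \<and> (\<exists>h. ancestor parent (fst s) h \<and>
              t = (epoch_boundary parent slot S h (snd t), snd t))"
proof -
  have "J s" using justified_mono[OF fin hp1[OF assms(1)] hp4[OF assms]] .
  moreover have "snd s < snd t" using Wep assms(2) by fastforce
  ultimately show ?thesis using hp6[OF assms] by blast
qed

lemma no_surround: assumes "v \<in> Vals - F" "(v, s1, t1) \<in> W" "(v, s2, t2) \<in> W" "snd t2 \<le> snd t1"
  shows "snd s2 \<le> snd s1"
proof -
  have "justified genesis Vals (view v (snd t1)) s2"
    using justified_mono[OF fin hp2[OF assms(1) assms(4)] hp4[OF assms(1,3)]] .
  then show ?thesis using hp5[OF assms(1,2)] by blast
qed

lemma link_pos: assumes "sm_link Vals W s t" shows "0 < snd t"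
proof -
  obtain v where "(v, s, t) \<in> W" using link_voter[OF assms] by blast
  then show ?thesis using Wep by fastforce
qed

lemma J_slot: assumes "J (x, e)" shows "slot x \<le> e * S"
proof (cases "(x, e) = (genesis, 0)")
  case True then show ?thesis using bt unfolding block_tree_def by simp
next
  case False
  then obtain s where "sm_link Vals W s (x, e)" using assms unfolding justified_def by blast
  then obtain v where "v \<in> Vals - F" "(v, s, (x, e)) \<in> W" using link_voter by blast
  then obtain h where "x = epoch_boundary parent slot S h e" using vote_props by fastforce
  then show ?thesis using eb_props[OF bt, of S h e] by simp
qed

lemma J_unique: assumes "J (x, e)" "J (y, e)" shows "x = y"
proof (cases "e = 0")
  case True
  have "(x, e) = (genesis, 0)" using assms(1) True link_pos unfolding justified_def by fastforce
  moreover have "(y, e) = (genesis, 0)" using assms(2) True link_pos unfolding justified_def by fastforce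
  ultimately show ?thesis by simp
next
  case False
  then obtain s s' where "sm_link Vals W s (x, e)" "sm_link Vals W s' (y, e)"
    using assms unfolding justified_def by auto
  then obtain v where "v \<in> Vals - F" "(v, s, (x, e)) \<in> W" "(v, s', (y, e)) \<in> W"
    using two_links by blast
  then show ?thesis using same_epoch_vote by fastforce
qed

lemma main_ind:
  assumes fa: "finalized parent slot S genesis Vals W (a, ea)"
  shows "J (x, ex) \<Longrightarrow> ea \<le> ex \<Longrightarrow> ancestor parent a x"
proof (induction ex arbitrary: x rule: less_induct)
  case (less ex)
  have Ja: "J (a, ea)" using fa unfolding finalized_def by (rule conjunct1)
  show ?case
  proof (cases "ex = ea")
    case True
    then have "J (x, ea)" using less.prems(1) by simp
    then have "a = x" by (rule J_unique[OF Ja])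
    then show ?thesis by (simp add: anc_refl)
  next
    case False
    then have gt: "ea < ex" using less.prems by simp
    then obtain s where lnk: "sm_link Vals W s (x, ex)" using less.prems unfolding justified_def by auto
    then obtain v1 where v1: "v1 \<in> Vals - F" "(v1, s, (x, ex)) \<in> W" using link_voter by blast
    from vote_props[OF v1] obtain h where
      Js: "J s" and ss: "snd s < ex" and h: "ancestor parent (fst s) h" "x = epoch_boundary parent slot S h ex"
      by auto
    have "slot (fst s) \<le> snd s * S" using J_slot[of "fst s" "snd s"] Js by simp
    also have "\<dots> \<le> ex * S" using ss by simp
    finally have sx: "ancestor parent (fst s) x" using eb_anc[OF bt h(1)] h(2) by simp
    show ?thesis
    proof (cases "ea \<le> snd s")
      case True
      have "J (fst s, snd s)" using Js by simp
      then have "ancestor parent a (fst s)" by (rule less.IH[OF ss _ True])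
      then show ?thesis by (rule anc_trans[OF _ sx])
    next
      case False
      obtain b eb where fl: "sm_link Vals W (a, ea) (b, eb)" "ea < eb" "eb \<le> ea + 2"
        "eb = ea + 2 \<longrightarrow> J (epoch_boundary parent slot S b (ea + 1), ea + 1)"
      proof -
        obtain b eb where "sm_link Vals W (a, ea) (b, eb) \<and> snd (a, ea) < eb \<and> eb \<le> snd (a, ea) + 2 \<and>
          (eb = snd (a, ea) + 2 \<longrightarrow> J (epoch_boundary parent slot S b (snd (a, ea) + 1), snd (a, ea) + 1))"
          using conjunct2[OF fa[unfolded finalized_def]] by blast
        then show ?thesis using that by auto
      qed
      obtain v where v: "v \<in> Vals - F" "(v, s, (x, ex)) \<in> W" "(v, (a, ea), (b, eb)) \<in> W"
        using two_links[OF lnk fl(1)] by blast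
      from vote_props[OF v(1) v(3)] obtain h' where
        h': "ancestor parent a h'" "b = epoch_boundary parent slot S h' eb" by auto
      have sa: "slot a \<le> ea * S" using J_slot[OF Ja] .
      have "ea * S \<le> eb * S" using fl(2) by simp
      then have "slot a \<le> eb * S" using sa by linarith
      then have ab: "ancestor parent a b" using eb_anc[OF bt h'(1), of eb S] h'(2) by simp
      consider "eb < ex" | "ex = eb" | "ex < eb" by linarith
      then show ?thesis
      proof cases
        case 1
        have "ea \<le> snd s" using no_surround[OF v(1) v(2) v(3)] 1 by simp
        then show ?thesis using False by simp
      next
        case 2
        then have "x = b" using same_epoch_vote[OF v(1) v(2) v(3)] by simp
        then show ?thesis using ab by simp
      next
        case 3
        then have e: "ex = ea + 1" "eb = ea + 2" using gt fl by auto
        then have "J (epoch_boundary parent slot S b (ea + 1), ea + 1)" using fl by simp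
        moreover have "J (x, ea + 1)" using less.prems(1) e by simp
        ultimately have "epoch_boundary parent slot S b (ea + 1) = x" by (rule J_unique)
        then have "x = epoch_boundary parent slot S b (ea + 1)" by simp
        moreover have "ea * S \<le> (ea + 1) * S" by simp
        then have "slot a \<le> (ea + 1) * S" using sa by linarith
        ultimately show ?thesis using eb_anc[OF bt ab] by simp
      qed
    qed
  qed
qed

end

theorem mainTheorem4:
  fixes parent :: "'b \<Rightarrow> 'b" and slot :: "'b \<Rightarrow> nat" and genesis :: 'b and S :: nat
    and Vals F :: "'v set" and W :: "('v, 'b) vote set"
    and view :: "'v \<Rightarrow> nat \<Rightarrow> ('v, 'b) vote set"
    and C C' :: "'b checkpoint"
  assumes "block_tree parent slot genesis"
    and "S > 0"
    and "finite Vals"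
    and "F \<subseteq> Vals"
    and "3 * card F < card Vals"
    and "\<forall>(v, s, t) \<in> W. snd s < snd t"
    and "\<forall>v \<in> Vals - F. honest parent slot S genesis Vals W view v"
    and "finalized parent slot S genesis Vals W C"
    and "finalized parent slot S genesis Vals W C'"
  shows "ancestor parent (fst C) (fst C') \<or> ancestor parent (fst C') (fst C)"
proof -
  interpret ffg parent slot genesis S Vals F W view
    using assms by unfold_locales auto
  obtain a ea where C: "C = (a, ea)" by (cases C)
  obtain a' ea' where C': "C' = (a', ea')" by (cases C')
  have J1: "justified genesis Vals W (a, ea)" and J2: "justified genesis Vals W (a', ea')"
    using conjunct1[OF assms(8)[unfolded finalized_def]] conjunct1[OF assms(9)[unfolded finalized_def]] C C' by simp_all
  show ?thesis
  proof (cases "ea \<le> ea'")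
    case True
    then show ?thesis using main_ind[of a ea a' ea'] assms(8) C C' J2 by simp
  next
    case False
    then show ?thesis using main_ind[of a' ea' a ea] assms(9) C C' J1 by simp
  qed
qed

end
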